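(* Let $T_1,\dots,T_m$ be a sequence of conjunctions over $\{0,1\}^n$, presented one at a time, each of which is a conjunction of some subset of metafeatures $m_1,\dots,m_k$ satisfying the anchor-variable condition. Then there is an online learner that exactly learns every target in the sequence using only $O(mk+n^3)$ equivalence queries in total.
   Context: A monomial/conjunction of positive variables is identified with its set of variables; a conjunction of a subset of metafeatures is the union of their variable sets. Metafeatures $m_1,\dots,m_k$ satisfy the anchor-variable condition if each $m_i$ contains a variable belonging to no other $m_j$. In the equivalence query model, the learner proposes a hypothesis and either is told it is exactly correct or receives a counterexample; the targets arrive sequentially and the learner may retain information (e.g., learned hypotheses) from earlier targets. *)

theory Defs
  imports Main
begin

(* Instances of {0,1}^n are boolean lists of length n; variable i is x ! i. *)
type_synonym inst = "bool list"
type_synonym hyp = "inst \<Rightarrow> bool"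

definition conj :: "nat set \<Rightarrow> hyp" where
  "conj S x \<longleftrightarrow> (\<forall>i\<in>S. x ! i)"

definition anchor_cond :: "nat \<Rightarrow> (nat \<Rightarrow> nat set) \<Rightarrow> bool" where
  "anchor_cond k M \<longleftrightarrow>
     (\<forall>i<k. \<exists>v\<in>M i. \<forall>j<k. j \<noteq> i \<longrightarrow> v \<notin> M j)"

(* A transcript: Some x = counterexample x received for the current target,
   None = "correct", i.e. the current target has been learned and the next
   target starts. A learner for dimension n maps the transcript so far
   (over all earlier targets and the current one) to its next hypothesis. *)
type_synonym history = "inst option list"
type_synonym learner = "history \<Rightarrow> hyp"

(* Reachable states (remaining targets, transcript, number of equivalence
   queries asked so far), for every possible (adaptive) choice of
   counterexamples by the adversary. *)
inductive eq_run :: "nat \<Rightarrow> learner \<Rightarrow> nat set list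
                      \<Rightarrow> nat set list \<Rightarrow> history \<Rightarrow> nat \<Rightarrow> bool"
  for n :: nat and L :: learner and Ts :: "nat set list" where
  start: "eq_run n L Ts Ts [] 0"
| correct: "\<lbrakk> eq_run n L Ts (T # rest) hs q;
             \<forall>x. length x = n \<longrightarrow> L hs x = conj T x \<rbrakk>
           \<Longrightarrow> eq_run n L Ts rest (hs @ [None]) (Suc q)"
| counterex: "\<lbrakk> eq_run n L Ts (T # rest) hs q;
               length x = n; L hs x \<noteq> conj T x \<rbrakk>
           \<Longrightarrow> eq_run n L Ts (T # rest) (hs @ [Some x]) (Suc q)"

end

theory Submission imports Defs Complex_Main begin

type_synonym world = "nat \<times> nat set list \<times> nat set list"

fun wt :: "nat \<Rightarrow> world \<Rightarrow> real" where
  "wt n (k', Ms, Js) = (1/2) ^ (k' * (n + 1) + length Js * k')"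

fun tgt :: "world \<Rightarrow> nat set" where
  "tgt (k', Ms, Js) = (\<Union>j\<in>hd Js. Ms ! j)"

definition Phi :: "nat \<Rightarrow> world set \<Rightarrow> real" where
  "Phi n S = (\<Sum>w\<in>S. wt n w)"

definition maj :: "nat \<Rightarrow> world set \<Rightarrow> hyp" where
  "maj n S x \<longleftrightarrow> Phi n S \<le> 2 * (\<Sum>w\<in>{w\<in>S. conj (tgt w) x}. wt n w)"

definition V0 :: "nat \<Rightarrow> world set" where
  "V0 n = {(k', Ms, [J]) | k' Ms J. 1 \<le> k' \<and> k' \<le> n \<and> length Ms = k'
            \<and> set Ms \<subseteq> Pow {..<n} \<and> J \<subseteq> {..<k'}}"

definition ext :: "world set \<Rightarrow> world set" where
  "ext S = {(k', Ms, J' # Js) | k' Ms Js J'. (k', Ms, Js) \<in> S \<and> J' \<subseteq> {..<k'}}"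

fun upd :: "nat \<Rightarrow> world set \<Rightarrow> inst option \<Rightarrow> world set" where
  "upd n S (Some x) = {w\<in>S. conj (tgt w) x \<noteq> maj n S x}"
| "upd n S None = ext {w\<in>S. \<forall>x. length x = n \<longrightarrow> conj (tgt w) x = maj n S x}"

definition V :: "nat \<Rightarrow> history \<Rightarrow> world set" where
  "V n hs = foldl (upd n) (V0 n) hs"

definition Lrn :: "nat \<Rightarrow> learner" where
  "Lrn n hs = maj n (V n hs)"

definition cS :: "history \<Rightarrow> nat" where "cS hs = length (filter (\<lambda>a. a \<noteq> None) hs)"
definition cN :: "history \<Rightarrow> nat" where "cN hs = length (filter (\<lambda>a. a = None) hs)"

lemma V_snoc[simp]: "V n (hs @ [a]) = upd n (V n hs) a"
  by (simp add: V_def)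
lemma V_nil[simp]: "V n [] = V0 n" by (simp add: V_def)

lemma ext_eq: "ext S = (\<lambda>((k', Ms, Js), J'). (k', Ms, J' # Js)) ` (SIGMA w:S. Pow {..<fst w})"
proof (rule set_eqI, rule iffI)
  fix w assume "w \<in> ext S"
  then obtain k' Ms Js J' where w: "w = (k', Ms, J' # Js)" "(k', Ms, Js) \<in> S" "J' \<subseteq> {..<k'}"
    unfolding ext_def by blast
  show "w \<in> (\<lambda>((k', Ms, Js), J'). (k', Ms, J' # Js)) ` (SIGMA w:S. Pow {..<fst w})"
    by (rule image_eqI[of _ _ "((k', Ms, Js), J')"]) (use w in auto)
next
  fix w assume "w \<in> (\<lambda>((k', Ms, Js), J'). (k', Ms, J' # Js)) ` (SIGMA w:S. Pow {..<fst w})"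
  then show "w \<in> ext S" unfolding ext_def by auto
qed

lemma finite_V0: "finite (V0 n)"
proof -
  have "V0 n \<subseteq> {1..n} \<times> {Ms. set Ms \<subseteq> Pow {..<n} \<and> length Ms \<le> n} \<times> ((\<lambda>J. [J]) ` Pow {..<n})"
  proof
    fix w assume "w \<in> V0 n"
    then obtain k' Ms J where w: "w = (k', Ms, [J])" "1 \<le> k'" "k' \<le> n" "length Ms = k'"
      "set Ms \<subseteq> Pow {..<n}" "J \<subseteq> {..<k'}" unfolding V0_def by blast
    have "[J] \<in> (\<lambda>J. [J]) ` Pow {..<n}" using w by (intro image_eqI[of _ _ J]) auto
    then show "w \<in> {1..n} \<times> {Ms. set Ms \<subseteq> Pow {..<n} \<and> length Ms \<le> n} \<times> ((\<lambda>J. [J]) ` Pow {..<n})"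
      using w by simp
  qed
  moreover have "finite {Ms. set Ms \<subseteq> Pow {..<n} \<and> length Ms \<le> n}"
    by (rule finite_lists_length_le) simp
  ultimately show ?thesis by (meson finite_SigmaI finite_atLeastAtMost finite_imageI finite_Pow_iff finite_lessThan finite_subset)
qed

lemma finite_ext: "finite S \<Longrightarrow> finite (ext S)"
  unfolding ext_eq by auto

lemma finite_V: "finite (V n hs)"
proof (induction hs rule: rev_induct)
  case (snoc a hs) then show ?case by (cases a) (auto simp: finite_ext)
qed (simp add: finite_V0)

lemma wt_cons: "wt n (k', Ms, J' # Js) = wt n (k', Ms, Js) * (1/2) ^ k'"
  by (simp add: power_add[symmetric] algebra_simps)

lemma Phi_ext: assumes "finite S" shows "Phi n (ext S) = Phi n S"
proof -
  let ?f = "(\<lambda>((k', Ms, Js), J'). (k', Ms, J' # Js)) :: world \<times> nat set \<Rightarrow> world"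
  let ?Sig = "SIGMA w:S. Pow {..<fst w}"
  have inj: "inj_on ?f ?Sig" by (auto simp: inj_on_def)
  have "Phi n (ext S) = (\<Sum>p\<in>?Sig. wt n (?f p))"
    unfolding Phi_def ext_eq by (subst sum.reindex[OF inj]) (simp add: comp_def)
  also have "\<dots> = (\<Sum>w\<in>S. \<Sum>J'\<in>Pow {..<fst w}. wt n (?f (w, J')))"
    using assms by (subst sum.Sigma) (auto simp: case_prod_unfold)
  also have "\<dots> = (\<Sum>w\<in>S. wt n w)"
  proof (rule sum.cong[OF refl])
    fix w assume "w \<in> S"
    obtain k' Ms Js where w: "w = (k', Ms, Js)" by (cases w) auto
    have "(\<Sum>J'\<in>Pow {..<fst w}. wt n (?f (w, J'))) = (\<Sum>J'\<in>Pow {..<k'}. wt n w * (1/2) ^ k')"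
      using w by (simp add: wt_cons del: wt.simps)
    also have "\<dots> = 2 ^ k' * (wt n w * (1/2) ^ k')" by (simp add: card_Pow)
    also have "\<dots> = wt n w" by (simp add: power_one_over field_simps)
    finally show "(\<Sum>J'\<in>Pow {..<fst w}. wt n (?f (w, J'))) = wt n w" .
  qed
  finally show ?thesis unfolding Phi_def .
qed

lemma wt_nonneg: "0 \<le> wt n w" by (cases w) auto

lemma Phi_mono: "finite S \<Longrightarrow> T \<subseteq> S \<Longrightarrow> Phi n T \<le> Phi n S"
  unfolding Phi_def by (rule sum_mono2) (auto simp: wt_nonneg)

lemma Phi_half: assumes "finite S" shows "Phi n (upd n S (Some x)) \<le> Phi n S / 2"
proof -
  let ?P = "{w\<in>S. conj (tgt w) x}" and ?Q = "{w\<in>S. \<not> conj (tgt w) x}"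
  have split: "Phi n S = Phi n ?P + Phi n ?Q"
    unfolding Phi_def using assms by (subst sum.union_disjoint[symmetric]) (auto intro: sum.cong)
  show ?thesis
  proof (cases "maj n S x")
    case True
    then have "upd n S (Some x) = ?Q" by auto
    moreover have "Phi n S \<le> 2 * Phi n ?P" using True unfolding maj_def Phi_def .
    ultimately show ?thesis using split by simp
  next
    case False
    then have "upd n S (Some x) = ?P" by auto
    moreover have "\<not> Phi n S \<le> 2 * Phi n ?P" using False unfolding maj_def Phi_def .
    ultimately show ?thesis by simp
  qed
qed

lemma geom_le1: "(\<Sum>k\<in>{1..n}. (1/2::real) ^ k) = 1 - (1/2) ^ n"
  by (induction n) (auto simp: field_simps)

lemma Phi_V0: "Phi n (V0 n) \<le> 1"
proof -
  let ?L = "\<lambda>k'. {Ms. set Ms \<subseteq> Pow {..<n} \<and> length Ms = k'}"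
  let ?g = "(\<lambda>(k', Ms, J). (k', Ms, [J])) :: nat \<times> nat set list \<times> nat set \<Rightarrow> world"
  let ?Sig = "SIGMA k':{1..n}. SIGMA Ms:?L k'. Pow {..<k'}"
  have eq: "V0 n = ?g ` ?Sig"
  proof (rule set_eqI, rule iffI)
    fix w assume "w \<in> V0 n"
    then obtain k' Ms J where w: "w = (k', Ms, [J])" "1 \<le> k'" "k' \<le> n" "length Ms = k'"
      "set Ms \<subseteq> Pow {..<n}" "J \<subseteq> {..<k'}" unfolding V0_def by blast
    show "w \<in> ?g ` ?Sig" by (rule image_eqI[of _ _ "(k', Ms, J)"]) (use w in auto)
  qed (auto simp: V0_def)
  have inj: "inj_on ?g ?Sig" by (auto simp: inj_on_def)
  have finL: "finite (?L k')" for k' by (rule finite_lists_length_eq) auto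
  have cardL: "card (?L k') = (2^n)^k'" for k'
    by (subst card_lists_length_eq) (auto simp: card_Pow)
  have "Phi n (V0 n) = (\<Sum>p\<in>?Sig. wt n (?g p))"
    unfolding Phi_def eq by (subst sum.reindex[OF inj]) (simp add: comp_def)
  also have "\<dots> = (\<Sum>k'\<in>{1..n}. \<Sum>Ms\<in>?L k'. \<Sum>J\<in>Pow {..<k'}. wt n (?g (k', Ms, J)))"
  proof -
    have "(\<Sum>p\<in>?Sig. wt n (?g p)) = (\<Sum>k'\<in>{1..n}. \<Sum>q\<in>?L k' \<times> Pow {..<k'}. wt n (?g (k', q)))"
      using sum.Sigma[of "{1..n}" "\<lambda>k'. ?L k' \<times> Pow {..<k'}" "\<lambda>k' q. wt n (?g (k', q))"] finL
      by (simp add: case_prod_unfold)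
    also have "\<dots> = (\<Sum>k'\<in>{1..n}. \<Sum>Ms\<in>?L k'. \<Sum>J\<in>Pow {..<k'}. wt n (?g (k', Ms, J)))"
    proof (rule sum.cong[OF refl])
      fix k' show "(\<Sum>q\<in>?L k' \<times> Pow {..<k'}. wt n (?g (k', q))) = (\<Sum>Ms\<in>?L k'. \<Sum>J\<in>Pow {..<k'}. wt n (?g (k', Ms, J)))"
        using sum.Sigma[of "?L k'" "\<lambda>_. Pow {..<k'}" "\<lambda>Ms J. wt n (?g (k', Ms, J))"] finL
        by (simp add: case_prod_unfold)
    qed
    finally show ?thesis .
  qed
  also have "\<dots> = (\<Sum>k'\<in>{1..n}. (1/2) ^ k')"
  proof (rule sum.cong[OF refl])
    fix k' :: nat
    have "(\<Sum>Ms\<in>?L k'. \<Sum>J\<in>Pow {..<k'}. wt n (?g (k', Ms, J)))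
        = (2^n)^k' * (2^k' * (1/2) ^ (k' * (n + 1) + k'))"
      by (simp add: cardL card_Pow)
    also have "\<dots> = (1/2::real) ^ k'"
    proof -
      have "((2::real)^n)^k' * 2^k' = 2 ^ (k' * (n+1))"
        by (simp add: power_mult[symmetric] power_add[symmetric] algebra_simps)
      moreover have "(1/2::real) ^ (k' * (n + 1) + k') = (1/2)^(k'*(n+1)) * (1/2)^k'"
        by (simp add: power_add)
      moreover have "(2::real) ^ (k' * (n+1)) * (1/2)^(k'*(n+1)) = 1"
        by (simp add: power_one_over)
      ultimately show ?thesis by (metis (no_types, lifting) mult.assoc mult_1)
    qed
    finally show "(\<Sum>Ms\<in>?L k'. \<Sum>J\<in>Pow {..<k'}. wt n (?g (k', Ms, J))) = (1/2) ^ k'" .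
  qed
  also have "\<dots> \<le> 1" unfolding geom_le1 by simp
  finally show ?thesis .
qed

lemma Phi_V: "Phi n (V n hs) \<le> (1/2) ^ cS hs"
proof (induction hs rule: rev_induct)
  case Nil then show ?case by (simp add: cS_def Phi_V0)
next
  case (snoc a hs)
  show ?case
  proof (cases a)
    case None
    have "Phi n (V n (hs @ [a])) = Phi n {w\<in>V n hs. \<forall>x. length x = n \<longrightarrow> conj (tgt w) x = maj n (V n hs) x}"
      using None by (simp add: Phi_ext finite_V)
    also have "\<dots> \<le> Phi n (V n hs)" by (rule Phi_mono) (auto simp: finite_V)
    finally show ?thesis using snoc None by (simp add: cS_def)
  next
    case (Some x)
    have "Phi n (V n (hs @ [a])) \<le> Phi n (V n hs) / 2"
      by (simp only: V_snoc Some) (rule Phi_half[OF finite_V])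
    then show ?thesis using snoc Some by (simp add: cS_def)
  qed
qed

lemma tgt_star: "J \<subseteq> {..<k} \<Longrightarrow> tgt (k, map M [0..<k], J # Js) = (\<Union>j\<in>J. M j)"
  by (simp, rule SUP_cong) auto

lemma next_J:
  assumes "\<forall>T\<in>set Ts. \<exists>J\<subseteq>{..<k}. T = (\<Union>j\<in>J. M j)" "set rest \<subseteq> set Ts"
  shows "\<exists>J\<subseteq>{..<k}. \<forall>T r. rest = T # r \<longrightarrow> T = (\<Union>j\<in>J. M j)"
proof (cases rest)
  case Nil then show ?thesis by auto
next
  case (Cons T r) then show ?thesis using assms by auto
qed

lemma inv:
  assumes kn: "1 \<le> k" "k \<le> n" and Msub: "\<forall>i<k. M i \<subseteq> {..<n}"
    and TJ: "\<forall>T\<in>set Ts. \<exists>J\<subseteq>{..<k}. T = (\<Union>j\<in>J. M j)"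
  shows "eq_run n (Lrn n) Ts rest hs q \<Longrightarrow> q = length hs \<and> cN hs + length rest = length Ts
    \<and> set rest \<subseteq> set Ts \<and> (\<exists>Js. (k, map M [0..<k], Js) \<in> V n hs \<and> length Js = cN hs + 1
      \<and> (\<forall>T r. rest = T # r \<longrightarrow> T = tgt (k, map M [0..<k], Js)))"
proof (induction rule: eq_run.induct)
  case start
  obtain J where J: "J \<subseteq> {..<k}" "\<forall>T r. Ts = T # r \<longrightarrow> T = (\<Union>j\<in>J. M j)"
    using next_J[OF TJ, of Ts] by auto
  have "(k, map M [0..<k], [J]) \<in> V0 n"
    unfolding V0_def using kn Msub J by auto
  moreover have "\<forall>T r. Ts = T # r \<longrightarrow> T = tgt (k, map M [0..<k], [J])"
    using J(2) tgt_star[OF J(1), of M "[]"] by simp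
  ultimately show ?case by (simp add: cN_def del: tgt.simps) (rule exI[of _ "[J]"], simp del: tgt.simps)
next
  case (correct T rest hs q)
  then obtain Js where Js: "(k, map M [0..<k], Js) \<in> V n hs" "length Js = cN hs + 1"
    "T = tgt (k, map M [0..<k], Js)" by auto
  have sub: "set rest \<subseteq> set Ts" using correct by auto
  obtain J where J: "J \<subseteq> {..<k}" "\<forall>T r. rest = T # r \<longrightarrow> T = (\<Union>j\<in>J. M j)"
    using next_J[OF TJ sub] by auto
  have "(k, map M [0..<k], J # Js) \<in> V n (hs @ [None])"
    using Js correct.hyps(2) J(1) unfolding Lrn_def by (auto simp: ext_def)
  moreover have "\<forall>T r. rest = T # r \<longrightarrow> T = tgt (k, map M [0..<k], J # Js)"
    using J(2) tgt_star[OF J(1), of M Js] by simp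
  moreover have "q = length hs" "cN hs + length (T # rest) = length Ts" using correct.IH by auto
  ultimately show ?case using sub Js(2) by (simp add: cN_def del: tgt.simps) (rule exI[of _ "J # Js"], simp del: tgt.simps)
next
  case (counterex T rest hs q x)
  then obtain Js where Js: "(k, map M [0..<k], Js) \<in> V n hs" "length Js = cN hs + 1"
    "T = tgt (k, map M [0..<k], Js)" by auto
  have "(k, map M [0..<k], Js) \<in> V n (hs @ [Some x])"
    using Js counterex.hyps(3) unfolding Lrn_def by auto
  then show ?case using counterex Js by (auto simp: cN_def intro!: exI[of _ Js])
qed

lemma anchor_k_le: assumes "anchor_cond k M" "\<forall>i<k. M i \<subseteq> {..<n}" shows "k \<le> n"
proof -
  obtain f where f: "\<forall>i<k. f i \<in> M i \<and> (\<forall>j<k. j \<noteq> i \<longrightarrow> f i \<notin> M j)"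
    using assms(1) unfolding anchor_cond_def by metis
  have "inj_on f {..<k}" unfolding inj_on_def using f by (metis lessThan_iff)
  moreover have "f ` {..<k} \<subseteq> {..<n}" using f assms(2) by auto
  ultimately have "card {..<k} \<le> card {..<n}" by (intro card_inj_on_le) auto
  then show ?thesis by simp
qed

lemma arith_bound:
  fixes k n m s c :: nat
  assumes "1 \<le> k" "k \<le> n" "c \<le> m" "s \<le> k * (n + 1) + (c + 1) * k"
  shows "s + c \<le> 3 * (m * k + n ^ 3)"
proof -
  have n1: "1 \<le> n" using assms by simp
  have a: "k * (n + 2) \<le> n * (n + 2)" using assms(2) by (rule mult_le_mono1)
  have b: "n * n \<le> n * n * n" using n1 by simp
  have c: "n \<le> n * n * n" using n1 by (metis b le_trans mult_le_mono1 nat_mult_1 mult.commute)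
  have d: "c * k \<le> m * k" using assms(3) by (rule mult_le_mono1)
  have e: "m \<le> m * k" using assms(1) by simp
  have "s + c \<le> k * (n + 2) + c * k + c" using assms(4) by (simp add: algebra_simps)
  also have "\<dots> \<le> n * (n + 2) + m * k + m" using a d assms(3) by linarith
  also have "\<dots> \<le> 3 * (m * k + n ^ 3)"
  proof -
    have f: "n * (n + 2) = n * n + 2 * n" by (simp add: algebra_simps)
    obtain aa bb dd :: nat where AB: "aa = n * n" "bb = n * n * n" "dd = m * k" by blast
    have "aa \<le> bb" "n \<le> bb" "m \<le> dd" using b c e AB by auto
    then have "aa + 2 * n + dd + m \<le> 3 * (dd + bb)" by simp
    then show ?thesis unfolding power3_eq_cube f using AB by simp
  qed
  finally show ?thesis .
qed

theorem corollary1: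
  "\<exists>(C::nat) (L :: nat \<Rightarrow> learner).
     \<forall>n k (M :: nat \<Rightarrow> nat set) (Ts :: nat set list).
       k \<ge> 1 \<longrightarrow>
       (\<forall>i<k. M i \<subseteq> {..<n}) \<longrightarrow>
       anchor_cond k M \<longrightarrow>
       (\<forall>T\<in>set Ts. \<exists>J\<subseteq>{..<k}. T = (\<Union>j\<in>J. M j)) \<longrightarrow>
       (\<forall>rest hs q. eq_run n (L n) Ts rest hs q \<longrightarrow>
          q \<le> C * (length Ts * k + n ^ 3))"
proof (intro exI allI impI)
  fix n k M Ts rest hs q
  assume k1: "1 \<le> k" and Msub: "\<forall>i<k. M i \<subseteq> {..<n}" and anch: "anchor_cond k M"
    and TJ: "\<forall>T\<in>set Ts. \<exists>J\<subseteq>{..<k}. T = (\<Union>j\<in>J. M j)"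
    and run: "eq_run n (Lrn n) Ts rest hs q"
  have kn: "k \<le> n" by (rule anchor_k_le[OF anch Msub])
  from inv[OF k1 kn Msub TJ run] obtain Js where
    q: "q = length hs" and cn: "cN hs + length rest = length Ts"
    and mem: "(k, map M [0..<k], Js) \<in> V n hs" and lJs: "length Js = cN hs + 1" by blast
  have "wt n (k, map M [0..<k], Js) \<le> Phi n (V n hs)"
    unfolding Phi_def by (rule member_le_sum[OF mem wt_nonneg finite_V])
  also have "\<dots> \<le> (1/2) ^ cS hs" by (rule Phi_V)
  finally have "(1/2::real) ^ (k * (n + 1) + (cN hs + 1) * k) \<le> (1/2) ^ cS hs"
    using lJs by simp
  then have s: "cS hs \<le> k * (n + 1) + (cN hs + 1) * k"
    by (simp add: power_decreasing_iff)
  have len: "length hs = cS hs + cN hs"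
    unfolding cS_def cN_def using sum_length_filter_compl[of "\<lambda>a. a = None" hs] by simp
  have "cN hs \<le> length Ts" using cn by simp
  from arith_bound[OF k1 kn this s] show "q \<le> 3 * (length Ts * k + n ^ 3)"
    using q len by simp
qed

end
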